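(* Let $F\in\mathbb{C}(X_1,\dots,X_n)$ be a rational function admitting a power series expansion at the origin $\sum_{k_1,\dots,k_n}a_{k_1,\dots,k_n}X_1^{k_1}\cdots X_n^{k_n}$ with non-negative coefficients $a_{k_1,\dots,k_n}\geq 0$. If $\sum_{k_1,\dots,k_n}a_{k_1,\dots,k_n}<\infty$, then there exists $\varepsilon>0$ such that this power series converges on the polydisk $\{(w_1,\dots,w_n)\in\mathbb{C}^n:\ |w_i|\leq 1+\varepsilon\text{ for all }1\leq i\leq n\}$. *)

theory Defs
  imports "HOL-Analysis.Analysis"
begin

definition multi_indices :: "nat \<Rightarrow> (nat \<Rightarrow> nat) set" where
  "multi_indices n = {k. \<forall>i\<ge>n. k i = 0}"

text \<open>The monomial w_0^(k 0) * ... * w_(n-1)^(k (n-1)); points of C^n are w :: nat \<Rightarrow> complex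
  (only coordinates i < n matter).\<close>
definition monom_val :: "nat \<Rightarrow> (nat \<Rightarrow> nat) \<Rightarrow> (nat \<Rightarrow> complex) \<Rightarrow> complex" where
  "monom_val n k w = (\<Prod>i<n. w i ^ k i)"

definition is_mpoly_fun :: "nat \<Rightarrow> ((nat \<Rightarrow> complex) \<Rightarrow> complex) \<Rightarrow> bool" where
  "is_mpoly_fun n f \<longleftrightarrow> (\<exists>A c. finite A \<and> A \<subseteq> multi_indices n \<and>
      f = (\<lambda>w. \<Sum>k\<in>A. c k * monom_val n k w))"

end

theory Submission imports Defs "HOL-Complex_Analysis.Complex_Analysis" "HOL-Computational_Algebra.Polynomial_Factorial" "HOL-Computational_Algebra.Field_as_Ring"
begin


lemma poly_div_power_limit:
  fixes p :: "complex poly"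
  assumes "((\<lambda>s. poly p s / s^m) \<longlongrightarrow> L) (at 0)"
  shows "coeff p m = L \<and> (\<forall>j<m. coeff p j = 0)"
  using assms
proof (induction m arbitrary: p L)
  case 0
  have "(poly p \<longlongrightarrow> poly p 0) (at 0)"
    by (intro isCont_tendsto_compose[of _ "poly p"] tendsto_ident_at) auto
  moreover have "(poly p \<longlongrightarrow> L) (at 0)" using 0 by simp
  ultimately have "L = poly p 0" using tendsto_unique by (metis trivial_limit_at)
  then show ?case by (simp add: poly_0_coeff_0)
next
  case (Suc m)
  obtain c p' where p: "p = pCons c p'" by (cases p) auto
  have "((\<lambda>s. poly p s / s^Suc m * s^Suc m) \<longlongrightarrow> L * 0^Suc m) (at 0)"
    by (intro tendsto_intros Suc.prems)
  moreover have "eventually (\<lambda>s. poly p s / s^Suc m * s^Suc m = poly p s) (at 0)"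
    by (auto simp: eventually_at_filter)
  ultimately have "(poly p \<longlongrightarrow> 0) (at 0)"
    by (simp add: tendsto_cong)
  moreover have "(poly p \<longlongrightarrow> poly p 0) (at 0)"
    by (intro isCont_tendsto_compose[of _ "poly p"] tendsto_ident_at) auto
  ultimately have "poly p 0 = 0" using tendsto_unique by (metis trivial_limit_at)
  then have c0: "c = 0" by (simp add: p)
  have "eventually (\<lambda>s. poly p s / s^Suc m = poly p' s / s^m) (at 0)"
    by (auto simp: eventually_at_filter p c0)
  then have "((\<lambda>s. poly p' s / s^m) \<longlongrightarrow> L) (at 0)"
    using Suc.prems tendsto_cong by fastforce
  from Suc.IH[OF this] show ?case
    by (auto simp: p c0 coeff_pCons less_Suc_eq_0_disj)
qed

lemma poly_div_power_limit':
  fixes p :: "complex poly"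
  assumes "\<forall>j<m. coeff p j = 0"
  shows "((\<lambda>s. poly p s / s^m) \<longlongrightarrow> coeff p m) (at 0)"
  using assms
proof (induction m arbitrary: p)
  case 0
  have "(poly p \<longlongrightarrow> poly p 0) (at 0)"
    by (intro isCont_tendsto_compose[of _ "poly p"] tendsto_ident_at) auto
  then show ?case by (simp add: poly_0_coeff_0)
next
  case (Suc m)
  obtain c p' where p: "p = pCons c p'" by (cases p) auto
  have c0: "c = 0" using Suc.prems p by (metis coeff_pCons_0 zero_less_Suc)
  have "\<forall>j<m. coeff p' j = 0" using Suc.prems p by auto
  from Suc.IH[OF this] have "((\<lambda>s. poly p' s / s^m) \<longlongrightarrow> coeff p (Suc m)) (at 0)"
    by (simp add: p)
  moreover have "eventually (\<lambda>s. poly p' s / s^m = poly p s / s^Suc m) (at 0)"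
    by (auto simp: eventually_at_filter p c0)
  ultimately show ?case using tendsto_cong by fastforce
qed



lemma ball_minus_finite_nonempty:
  assumes "finite Z" "e > 0" shows "ball (x::complex) e - Z \<noteq> {}"
proof -
  have "infinite (ball x e)" using islimpt_eq_infinite_ball[of x UNIV] assms by auto
  then show ?thesis using assms(1) by (metis Diff_infinite_finite finite.emptyI)
qed

lemma one_dim:
  fixes b :: "nat \<Rightarrow> real" and p q :: "complex poly"
  assumes b0: "\<And>m. b m \<ge> 0" and bs: "summable b" and q0: "q \<noteq> 0" and r0: "r0 > 0"
    and Z: "finite Z"
    and eq: "\<And>t. t \<in> ball 0 r0 - Z \<Longrightarrow>
       eval_fps (Abs_fps (\<lambda>m. complex_of_real (b m))) t * poly q t = poly p t"
  shows "\<exists>\<rho>>1. summable (\<lambda>m. b m * \<rho>^m)"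
proof -
  define F where "F = Abs_fps (\<lambda>m. complex_of_real (b m))"
  define g where "g = eval_fps F"
  have "summable (\<lambda>n. fps_nth F n * 1^n)" using bs by (simp add: F_def)
  then have "conv_radius (fps_nth F) \<ge> norm (1::complex)" by (rule conv_radius_geI)
  then have rad: "fps_conv_radius F \<ge> 1" by (simp add: fps_conv_radius_def one_ereal_def)
  have holo: "g holomorphic_on ball 0 1"
    unfolding g_def by (rule holomorphic_on_eval_fps) (use rad in \<open>auto intro!: less_le_trans[OF _ rad]\<close>)
  define B where "B = suminf b"
  have bound: "norm (g z) \<le> B" if "norm z \<le> 1" for z
  proof -
    have nb: "norm (complex_of_real (b n) * z^n) \<le> b n" for n
    proof -
      have "norm (complex_of_real (b n) * z^n) = b n * norm z ^ n" using b0 by (simp add: norm_mult norm_power)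
      also have "\<dots> \<le> b n * 1" using b0 that by (intro mult_left_mono power_le_one) auto
      finally show ?thesis by simp
    qed
    have sn: "summable (\<lambda>n. norm (complex_of_real (b n) * z^n))"
      by (rule summable_comparison_test[OF _ bs]) (use nb in auto)
    have "g z = (\<Sum>n. complex_of_real (b n) * z^n)" by (simp add: g_def F_def eval_fps_def)
    then have "norm (g z) \<le> (\<Sum>n. norm (complex_of_real (b n) * z^n))"
      using summable_norm[OF sn] by simp
    also have "\<dots> \<le> B" unfolding B_def by (rule suminf_le[OF nb sn bs])
    finally show ?thesis .
  qed
  have eq0: "g z * poly q z = poly p z" if "z \<in> ball 0 1" for z
  proof (rule analytic_continuation_open[where s = "ball 0 (min r0 1) - Z" and s' = "ball 0 1" and f = "\<lambda>z. g z * poly q z" and g = "poly p"])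
    show "open (ball 0 (min r0 1) - Z)" using Z by (intro open_Diff finite_imp_closed) auto
    show "ball 0 (min r0 1) - Z \<noteq> {}" using Z r0 by (intro ball_minus_finite_nonempty) auto
    show "(\<lambda>z. g z * poly q z) holomorphic_on ball 0 1" by (intro holomorphic_intros holo)
    show "poly p holomorphic_on ball 0 1" by (intro holomorphic_intros)
    show "g z * poly q z = poly p z" if "z \<in> ball 0 (min r0 1) - Z" for z
      using eq[of z] that by (auto simp: g_def F_def)
  qed (use that in auto)
  define d where "d = gcd p q"
  define p1 where "p1 = p div d"
  define q1 where "q1 = q div d"
  have d0: "d \<noteq> 0" using q0 by (simp add: d_def)
  have pd: "p = p1 * d" unfolding p1_def d_def by simp
  have qd: "q = q1 * d" unfolding q1_def d_def by simp
  have cop: "coprime p1 q1" unfolding p1_def q1_def d_def using q0 by (intro div_gcd_coprime) auto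
  have q10: "q1 \<noteq> 0" using q0 qd by auto
  have eq1: "g z * poly q1 z = poly p1 z" if "z \<in> ball 0 1" for z
  proof (rule analytic_continuation_open[where s = "ball 0 1 - {z. poly d z = 0}" and s' = "ball 0 1" and f = "\<lambda>z. g z * poly q1 z" and g = "poly p1"])
    show "open (ball 0 1 - {z. poly d z = 0})" using poly_roots_finite[OF d0]
      by (intro open_Diff finite_imp_closed) auto
    show "ball 0 1 - {z. poly d z = 0} \<noteq> {}" using poly_roots_finite[OF d0]
      by (intro ball_minus_finite_nonempty) auto
    show "(\<lambda>z. g z * poly q1 z) holomorphic_on ball 0 1" by (intro holomorphic_intros holo)
    show "poly p1 holomorphic_on ball 0 1" by (intro holomorphic_intros)
    show "g z * poly q1 z = poly p1 z" if "z \<in> ball 0 1 - {z. poly d z = 0}" for z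
      using eq0[of z] that by (auto simp: pd qd)
  qed (use that in auto)
  have le: "norm (poly p1 z) \<le> B * norm (poly q1 z)" if "norm z \<le> 1" for z
  proof -
    let ?f = "\<lambda>s::real. complex_of_real s * z"
    have lim: "(?f \<longlongrightarrow> z) (at_left 1)"
      by (rule tendsto_eq_intros) (auto intro!: tendsto_intros)
    have "((\<lambda>s. norm (poly p1 (?f s))) \<longlongrightarrow> norm (poly p1 z)) (at_left 1)"
      by (intro tendsto_norm isCont_tendsto_compose[OF _ lim]) auto
    moreover have "((\<lambda>s. B * norm (poly q1 (?f s))) \<longlongrightarrow> B * norm (poly q1 z)) (at_left 1)"
      by (intro tendsto_mult tendsto_const tendsto_norm isCont_tendsto_compose[OF _ lim]) auto
    moreover have "eventually (\<lambda>s. norm (poly p1 (?f s)) \<le> B * norm (poly q1 (?f s))) (at_left 1)"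
    proof -
      have "eventually (\<lambda>s::real. s \<in> {0<..<1}) (at_left 1)"
        by (rule eventually_at_left_real) auto
      then show ?thesis
      proof eventually_elim
        case (elim s)
        then have elim: "s > 0" "s < 1" by auto
        have ns: "norm (?f s) < 1"
        proof -
          have "norm (?f s) = s * norm z" using elim by (simp add: norm_mult)
          also have "\<dots> \<le> s" using elim that by (simp add: mult_left_le)
          finally show ?thesis using elim by simp
        qed
        then have "poly p1 (?f s) = g (?f s) * poly q1 (?f s)" using eq1[of "?f s"] by simp
        then have "norm (poly p1 (?f s)) = norm (g (?f s)) * norm (poly q1 (?f s))"
          by (simp add: norm_mult)
        also have "\<dots> \<le> B * norm (poly q1 (?f s))"
          using bound[of "?f s"] ns by (intro mult_right_mono) auto
        finally show ?case .
      qed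
    qed
    ultimately show ?thesis by (intro tendsto_le[OF trivial_limit_at_left_real]) auto
  qed
  have nr: "poly q1 z \<noteq> 0" if "norm z \<le> 1" for z
  proof
    assume qz: "poly q1 z = 0"
    then have pz: "poly p1 z = 0" using le[OF that] by simp
    have "[:-z,1:] dvd p1" "[:-z,1:] dvd q1" using pz qz by (simp_all add: poly_eq_0_iff_dvd)
    then have "is_unit [:-z,1:]" using cop coprime_common_divisor by blast
    then show False by (subst (asm) is_unit_iff_degree) auto
  qed
  define R where "R = {z. poly q1 z = 0}"
  have Rfin: "finite R" using poly_roots_finite[OF q10] by (simp add: R_def)
  define \<rho>' where "\<rho>' = Min (insert 2 (norm ` R))"
  have \<rho>'gt: "\<rho>' > 1" unfolding \<rho>'_def using Rfin nr
    by (subst Min_gr_iff) (auto simp: R_def not_le[symmetric])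
  have noroot: "poly q1 z \<noteq> 0" if "z \<in> ball 0 \<rho>'" for z
  proof
    assume "poly q1 z = 0"
    then have "\<rho>' \<le> norm z" unfolding \<rho>'_def using Rfin by (intro Min_le) (auto simp: R_def)
    with that show False by simp
  qed
  define h where "h = (\<lambda>z. poly p1 z / poly q1 z)"
  have hholo: "h holomorphic_on eball 0 (ereal \<rho>')"
    unfolding h_def using noroot by (auto intro!: holomorphic_intros)
  have "eventually (\<lambda>z. z \<in> ball 0 1) (nhds (0::complex))"
    by (intro eventually_nhds_in_open) auto
  then have ev: "eventually (\<lambda>z. g z = h z) (nhds 0)"
    by eventually_elim (use eq1 nr in \<open>auto simp: h_def field_simps\<close>)
  have "g has_fps_expansion F" unfolding g_def
    by (rule eval_fps_has_fps_expansion) (rule less_le_trans[OF _ rad], simp)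
  then have hF: "h has_fps_expansion F" using has_fps_expansion_cong[OF ev refl] by simp
  have "fps_expansion h 0 = F"
    by (rule fps_ext) (simp add: fps_nth_fps_expansion[OF hF] fps_expansion_def)
  then have "fps_conv_radius F \<ge> \<rho>'" using conv_radius_fps_expansion[OF hholo] by simp
  define \<rho> where "\<rho> = (1 + \<rho>') / 2"
  have "\<rho> > 0" using \<rho>'gt by (simp add: \<rho>_def)
  then have nrho: "norm (complex_of_real \<rho>) = \<rho>" by (simp only: norm_of_real)
  have "ereal (norm (complex_of_real \<rho>)) < conv_radius (fps_nth F)"
  proof -
    note nrho
    moreover have "ereal \<rho> < ereal \<rho>'" using \<rho>'gt by (simp add: \<rho>_def)
    ultimately show ?thesis using \<open>fps_conv_radius F \<ge> \<rho>'\<close> unfolding fps_conv_radius_def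
      by (metis less_le_trans)
  qed
  from abs_summable_in_conv_radius[OF this]
  have "summable (\<lambda>n. b n * \<rho> ^ n)" using b0 \<open>\<rho> > 0\<close>
    by (simp add: F_def norm_mult norm_power nrho)
  then show ?thesis using \<rho>'gt by (intro exI[of _ \<rho>]) (auto simp: \<rho>_def)
qed



lemma infsum_split_finite:
  fixes f :: "'a \<Rightarrow> 'b::banach"
  assumes "f summable_on A" "finite S" "S \<subseteq> A"
  shows "infsum f A = sum f S + infsum f (A - S)"
proof -
  have "A = S \<union> (A - S)" using assms by auto
  then have "infsum f A = infsum f (S \<union> (A - S))" by simp
  also have "\<dots> = infsum f S + infsum f (A - S)"
    by (intro infsum_Un_disjoint summable_on_subset_banach[OF assms(1)]) (use assms in auto)
  finally show ?thesis using assms by simp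
qed

lemma infsum_tendsto_dominated:
  fixes f :: "'x \<Rightarrow> 'k \<Rightarrow> complex" and B :: "'k \<Rightarrow> real"
  assumes Bs: "B summable_on A"
    and ev: "eventually (\<lambda>x. \<forall>k\<in>A. norm (f x k) \<le> B k) F"
    and b0: "\<forall>k\<in>A. norm (f0 k) \<le> B k"
    and lim: "\<forall>k\<in>A. ((\<lambda>x. f x k) \<longlongrightarrow> f0 k) F"
  shows "((\<lambda>x. infsum (f x) A) \<longlongrightarrow> infsum f0 A) F"
proof (rule tendstoI)
  fix e :: real assume e: "e > 0"
  obtain S where S: "finite S" "S \<subseteq> A" "dist (sum B S) (infsum B A) \<le> e/4"
    using infsum_finite_approximation[OF Bs, of "e/4"] e by auto
  have tailB: "infsum B (A - S) \<le> e/4"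
    using infsum_split_finite[OF Bs S(1,2)] S(3) by (simp add: dist_norm)
  have Bsub: "B summable_on (A - S)" by (rule summable_on_subset_banach[OF Bs]) auto
  have tail: "norm (infsum g (A - S)) \<le> e/4" and gs: "g summable_on A"
    if g: "\<forall>k\<in>A. norm (g k) \<le> B k" for g :: "'k \<Rightarrow> complex"
  proof -
    have "(\<lambda>k. norm (B k)) summable_on A"
    proof (rule summable_on_cong[THEN iffD1, OF _ Bs])
      show "B k = norm (B k)" if "k \<in> A" for k using g that by (smt (verit) norm_ge_zero real_norm_def)
    qed
    then have gabs: "(\<lambda>k. norm (g k)) summable_on A"
      by (rule summable_on_comparison_test) (use g in \<open>auto intro: order_trans[OF norm_ge_zero]\<close>)
    then show "g summable_on A" by (rule Infinite_Sum.abs_summable_summable)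
    have gabs': "(\<lambda>k. norm (g k)) summable_on (A - S)" by (rule summable_on_subset_banach[OF gabs]) auto
    have "norm (infsum g (A - S)) \<le> infsum (\<lambda>k. norm (g k)) (A - S)"
      by (rule norm_infsum_bound[OF gabs'])
    also have "\<dots> \<le> infsum B (A - S)"
      by (rule infsum_mono[OF gabs' Bsub]) (use g in auto)
    finally show "norm (infsum g (A - S)) \<le> e/4" using tailB by simp
  qed
  have "((\<lambda>x. sum (f x) S) \<longlongrightarrow> sum f0 S) F"
    by (intro tendsto_sum) (use lim S in auto)
  then have ev2: "eventually (\<lambda>x. dist (sum (f x) S) (sum f0 S) < e/4) F"
    using e by (intro tendstoD) auto
  show "eventually (\<lambda>x. dist (infsum (f x) A) (infsum f0 A) < e) F"
    using ev ev2
  proof eventually_elim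
    case (elim x)
    have s1: "infsum (f x) A = sum (f x) S + infsum (f x) (A - S)"
      by (rule infsum_split_finite[OF gs[OF elim(1)] S(1,2)])
    have s2: "infsum f0 A = sum f0 S + infsum f0 (A - S)"
      by (rule infsum_split_finite[OF gs[OF b0] S(1,2)])
    have "dist (infsum (f x) A) (infsum f0 A)
        = norm ((sum (f x) S - sum f0 S) + infsum (f x) (A - S) - infsum f0 (A - S))"
      by (simp add: s1 s2 dist_norm algebra_simps)
    also have "\<dots> \<le> norm (sum (f x) S - sum f0 S) + norm (infsum (f x) (A - S)) + norm (infsum f0 (A - S))"
      using norm_triangle_ineq4[of "(sum (f x) S - sum f0 S) + infsum (f x) (A - S)" "infsum f0 (A - S)"]
        norm_triangle_ineq[of "sum (f x) S - sum f0 S" "infsum (f x) (A - S)"] by linarith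
    also have "\<dots> < e/4 + e/4 + e/4"
      using elim(2) tail[OF elim(1)] tail[OF b0] by (simp add: dist_norm)
    finally show ?case using e by simp
  qed
qed



lemma monom_const: "monom_val n k (\<lambda>_. z) = z ^ (\<Sum>i<n. k i)"
  by (simp add: monom_val_def power_sum)

lemma bij_deg:
  "bij_betw snd (SIGMA m:UNIV. {k \<in> multi_indices n. (\<Sum>i<n. k i) = m}) (multi_indices n)"
  unfolding bij_betw_def inj_on_def by (auto simp: image_iff)

lemma group_has_sum:
  fixes a :: "(nat \<Rightarrow> nat) \<Rightarrow> real" and z :: complex
  assumes as: "a summable_on multi_indices n" and a0: "\<forall>k\<in>multi_indices n. a k \<ge> 0"
    and z: "norm z \<le> 1"
  shows "((\<lambda>m. complex_of_real (infsum a {k \<in> multi_indices n. (\<Sum>i<n. k i) = m}) * z^m) has_sum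
           infsum (\<lambda>k. complex_of_real (a k) * monom_val n k (\<lambda>_. z)) (multi_indices n)) UNIV"
proof -
  define MI where "MI = multi_indices n"
  define D where "D m = {k \<in> MI. (\<Sum>i<n. k i) = m}" for m
  define f where "f k = complex_of_real (a k) * z ^ (\<Sum>i<n. k i)" for k
  have nb: "norm (f k) \<le> a k" if "k \<in> MI" for k
  proof -
    have "norm (f k) = a k * norm z ^ (\<Sum>i<n. k i)" using a0 that
      by (simp add: f_def norm_mult norm_power MI_def)
    also have "\<dots> \<le> a k * 1" using a0 that z by (intro mult_left_mono power_le_one) (auto simp: MI_def)
    finally show ?thesis by simp
  qed
  have "(\<lambda>k. norm (f k)) summable_on MI"
    by (rule summable_on_comparison_test[OF as[folded MI_def]]) (use nb in auto)
  then have fs: "f summable_on MI" by (rule Infinite_Sum.abs_summable_summable)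
  then have fsum: "(f has_sum infsum f MI) (multi_indices n)" by (simp add: MI_def)
  have "((\<lambda>x. f (snd x)) has_sum infsum f MI) (SIGMA m:UNIV. D m)"
    unfolding D_def MI_def by (rule has_sum_reindex_bij_betw[OF bij_deg, THEN iffD2]) (use fsum in \<open>simp add: MI_def\<close>)
  then have "((\<lambda>m. complex_of_real (infsum a (D m)) * z^m) has_sum infsum f MI) UNIV"
  proof (rule has_sum_SigmaD)
    fix m :: nat
    have "a summable_on D m" by (rule summable_on_subset_banach[OF as]) (auto simp: D_def MI_def)
    then have "(a has_sum infsum a (D m)) (D m)" by simp
    then have "((\<lambda>k. complex_of_real (a k) * z^m) has_sum (complex_of_real (infsum a (D m)) * z^m)) (D m)"
      by (intro has_sum_cmult_left has_sum_of_real)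
    then show "((\<lambda>k. f (snd (m, k))) has_sum complex_of_real (infsum a (D m)) * z ^ m) (D m)"
      by (rule has_sum_cong[THEN iffD1, rotated]) (auto simp: D_def f_def)
  qed
  moreover have "infsum f MI = infsum (\<lambda>k. complex_of_real (a k) * monom_val n k (\<lambda>_. z)) MI"
    unfolding f_def monom_const by simp
  ultimately show ?thesis by (simp add: D_def MI_def)
qed

lemma group_summable_back:
  fixes a :: "(nat \<Rightarrow> nat) \<Rightarrow> real" and \<rho> :: real
  assumes as: "a summable_on multi_indices n" and a0: "\<forall>k\<in>multi_indices n. a k \<ge> 0"
    and \<rho>: "\<rho> \<ge> 0"
    and bs: "summable (\<lambda>m. infsum a {k \<in> multi_indices n. (\<Sum>i<n. k i) = m} * \<rho>^m)"
  shows "(\<lambda>k. a k * \<rho> ^ (\<Sum>i<n. k i)) summable_on multi_indices n"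
proof -
  define MI where "MI = multi_indices n"
  define D where "D m = {k \<in> MI. (\<Sum>i<n. k i) = m}" for m
  define f where "f x = a (snd x) * \<rho> ^ (fst x)" for x :: "nat \<times> (nat \<Rightarrow> nat)"
  have aD: "a summable_on D m" for m
    by (rule summable_on_subset_banach[OF as]) (auto simp: D_def MI_def)
  have "(\<lambda>x. norm (f x)) summable_on (SIGMA m:UNIV. D m)"
  proof (subst Infinite_Sum.abs_summable_on_Sigma_iff, intro conjI ballI)
    fix m :: nat assume "m \<in> UNIV"
    have "(\<lambda>k. a k * \<rho>^m) summable_on D m" by (intro summable_on_cmult_left aD)
    then show "(\<lambda>y. norm (f (m, y))) summable_on D m"
      by (rule summable_on_cong[THEN iffD1, rotated]) (use a0 \<rho> in \<open>auto simp: f_def D_def MI_def\<close>)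
  next
    have eq: "infsum (\<lambda>y. norm (f (m, y))) (D m) = infsum a (D m) * \<rho>^m" for m
    proof -
      have "infsum (\<lambda>y. norm (f (m, y))) (D m) = infsum (\<lambda>k. a k * \<rho>^m) (D m)"
        by (rule infsum_cong) (use a0 \<rho> in \<open>auto simp: f_def D_def MI_def\<close>)
      also have "\<dots> = infsum a (D m) * \<rho>^m" by (rule infsum_cmult_left) (use aD in auto)
      finally show ?thesis .
    qed
    have nn: "infsum a (D m) \<ge> 0" for m
      by (rule infsum_nonneg) (use a0 in \<open>auto simp: D_def MI_def\<close>)
    have "(\<lambda>m. infsum a (D m) * \<rho>^m) summable_on UNIV"
      using bs nn \<rho> by (subst summable_on_UNIV_nonneg_real_iff) (auto simp: D_def MI_def)
    then show "(\<lambda>x. norm (\<Sum>\<^sub>\<infinity>y\<in>D x. norm (f (x, y)))) summable_on UNIV"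
      by (rule summable_on_cong[THEN iffD1, rotated]) (use eq nn \<rho> in auto)
  qed
  then have "f summable_on (SIGMA m:UNIV. D m)" by (rule Infinite_Sum.abs_summable_summable)
  then have "(\<lambda>x. a (snd x) * \<rho> ^ (\<Sum>i<n. snd x i)) summable_on (SIGMA m:UNIV. D m)"
    by (rule summable_on_cong[THEN iffD1, rotated]) (auto simp: f_def D_def)
  then show ?thesis
    using summable_on_reindex_bij_betw[OF bij_deg[of n], of "\<lambda>k. a k * \<rho> ^ (\<Sum>i<n. k i)"]
    by (simp add: D_def MI_def)
qed


lemma poly_map_poly_eval:
  fixes X :: "complex poly poly"
  shows "poly (map_poly (\<lambda>c. poly c t) X) s = poly (poly X [:s:]) t"
  by (induct X) (simp_all add: map_poly_pCons)

lemma coeff_map_poly_eval: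
  fixes X :: "complex poly poly"
  shows "coeff (map_poly (\<lambda>c. poly c t) X) j = poly (coeff X j) t"
  by (simp add: coeff_map_poly)

lemma eval_mpoly:
  fixes c :: "(nat \<Rightarrow> nat) \<Rightarrow> complex" and v :: "nat \<Rightarrow> complex"
  shows "poly (poly (\<Sum>k\<in>A. [:[:c k:]:] * (\<Prod>i<n. [:[:0,1:], [:v i:]:] ^ k i)) [:s:]) t
       = (\<Sum>k\<in>A. c k * monom_val n k (\<lambda>i. t + s * v i))"
  by (simp add: poly_sum poly_prod poly_power monom_val_def algebra_simps)

lemma norm_monom_le:
  assumes "\<forall>i<n. norm (w i) \<le> \<rho>"
  shows "norm (monom_val n k w) \<le> \<rho> ^ (\<Sum>i<n. k i)"
proof -
  have "norm (monom_val n k w) = (\<Prod>i<n. norm (w i) ^ k i)"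
    by (simp add: monom_val_def prod_norm[symmetric] norm_power)
  also have "\<dots> \<le> (\<Prod>i<n. \<rho> ^ k i)"
    by (intro prod_mono) (use assms in \<open>auto intro: power_mono\<close>)
  also have "\<dots> = \<rho> ^ (\<Sum>i<n. k i)" by (simp add: power_sum)
  finally show ?thesis .
qed

theorem lemmaB3:
  fixes n :: nat
    and P Q :: "(nat \<Rightarrow> complex) \<Rightarrow> complex"
    and a :: "(nat \<Rightarrow> nat) \<Rightarrow> real"
  assumes P: "is_mpoly_fun n P"
    and Q: "is_mpoly_fun n Q"
    and Q_nonzero: "Q \<noteq> (\<lambda>w. 0)"
    and expansion: "\<exists>r>0. \<forall>w. (\<forall>i<n. norm (w i) < r) \<and> Q w \<noteq> 0 \<longrightarrow>
        ((\<lambda>k. complex_of_real (a k) * monom_val n k w) has_sum (P w / Q w)) (multi_indices n)"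
    and nonneg: "\<forall>k\<in>multi_indices n. a k \<ge> 0"
    and finite_sum: "a summable_on multi_indices n"
  shows "\<exists>\<epsilon>>0. \<forall>w. (\<forall>i<n. norm (w i) \<le> 1 + \<epsilon>) \<longrightarrow>
        (\<lambda>k. complex_of_real (a k) * monom_val n k w) summable_on multi_indices n"
proof -
  define MI where "MI = multi_indices n"
  obtain r where r: "r > 0" and hs: "\<And>w. (\<forall>i<n. norm (w i) < r) \<Longrightarrow> Q w \<noteq> 0 \<Longrightarrow>
        ((\<lambda>k. complex_of_real (a k) * monom_val n k w) has_sum (P w / Q w)) MI"
    using expansion unfolding MI_def by blast
  obtain AP cP where Pdef: "P = (\<lambda>w. \<Sum>k\<in>AP. cP k * monom_val n k w)"
    using P unfolding is_mpoly_fun_def by blast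
  obtain AQ cQ where Qdef: "Q = (\<lambda>w. \<Sum>k\<in>AQ. cQ k * monom_val n k w)"
    using Q unfolding is_mpoly_fun_def by blast
  obtain v where v: "Q v \<noteq> 0" using Q_nonzero by auto
  define L where "L k = (\<Prod>i<n. [:[:0,1:], [:v i:]:] ^ k i :: complex poly poly)" for k
  define PP where "PP = (\<Sum>k\<in>AP. [:[:cP k:]:] * L k)"
  define QQ where "QQ = (\<Sum>k\<in>AQ. [:[:cQ k:]:] * L k)"
  have evP: "poly (poly PP [:s:]) t = P (\<lambda>i. t + s * v i)" for s t
    unfolding PP_def L_def Pdef by (rule eval_mpoly)
  have evQ: "poly (poly QQ [:s:]) t = Q (\<lambda>i. t + s * v i)" for s t
    unfolding QQ_def L_def Qdef by (rule eval_mpoly)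
  have QQ0: "QQ \<noteq> 0"
  proof
    assume "QQ = 0"
    then have "Q (\<lambda>i. 0 + 1 * v i) = 0" using evQ[of 1 0] by simp
    then show False using v by simp
  qed
  have ex: "\<exists>j. coeff QQ j \<noteq> 0" using QQ0 by (metis leading_coeff_0_iff)
  define j0 where "j0 = (LEAST j. coeff QQ j \<noteq> 0)"
  have q0nz: "coeff QQ j0 \<noteq> 0" unfolding j0_def by (rule LeastI_ex[OF ex])
  have low: "coeff QQ j = 0" if "j < j0" for j
    using not_less_Least[of j "\<lambda>j. coeff QQ j \<noteq> 0"] that unfolding j0_def by auto
  define q0 where "q0 = coeff QQ j0"
  define p0 where "p0 = coeff PP j0"
  define b where "b m = infsum a {k \<in> multi_indices n. (\<Sum>i<n. k i) = m}" for m
  define G where "G w = infsum (\<lambda>k. complex_of_real (a k) * monom_val n k w) MI" for w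
  define F where "F = Abs_fps (\<lambda>m. complex_of_real (b m))"
  have b0: "b m \<ge> 0" for m
    unfolding b_def by (rule infsum_nonneg) (use nonneg in auto)
  have gsum: "((\<lambda>m. complex_of_real (b m) * z^m) has_sum G (\<lambda>_. z)) UNIV" if "norm z \<le> 1" for z
    using group_has_sum[OF finite_sum nonneg that] unfolding b_def G_def MI_def .
  have "(\<lambda>m. complex_of_real (b m) * 1^m) sums G (\<lambda>_. 1)"
    by (rule has_sum_imp_sums) (rule gsum, simp)
  then have bs: "summable b" by (simp add: sums_iff)
  have gG: "eval_fps F z = G (\<lambda>_. z)" if "norm z \<le> 1" for z
    using has_sum_imp_sums[OF gsum[OF that]] unfolding eval_fps_def F_def
    by (simp add: sums_iff)
  define r0 where "r0 = min r 1 / 2"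
  have r0: "r0 > 0" using r by (simp add: r0_def)
  define M where "M = 1 + (\<Sum>i<n. norm (v i))"
  have M: "M > 0" unfolding M_def by (smt (verit) sum_nonneg norm_ge_zero)
  have vM: "norm (v i) \<le> M" if "i < n" for i
  proof -
    have "norm (v i) \<le> (\<Sum>i<n. norm (v i))" by (rule member_le_sum) (use that in auto)
    then show ?thesis by (simp add: M_def)
  qed
  have key: "eval_fps F t * poly q0 t = poly p0 t" if t: "t \<in> ball 0 r0 - {t. poly q0 t = 0}" for t
  proof -
    have tn: "norm t < r0" using t by auto
    have q0t: "poly q0 t \<noteq> 0" using t by auto
    define qs where "qs = map_poly (\<lambda>c. poly c t) QQ"
    define ps where "ps = map_poly (\<lambda>c. poly c t) PP"
    have cqs: "coeff qs j = poly (coeff QQ j) t" for j unfolding qs_def by (rule coeff_map_poly_eval)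
    have cps: "coeff ps j = poly (coeff PP j) t" for j unfolding ps_def by (rule coeff_map_poly_eval)
    have qs0: "qs \<noteq> 0" using cqs[of j0] q0t by (auto simp: q0_def)
    have lim1: "((\<lambda>s. poly qs s / s^j0) \<longlongrightarrow> poly q0 t) (at 0)"
      using poly_div_power_limit'[of j0 qs] low by (simp add: cqs q0_def)
    define w where "w s = (\<lambda>i. t + s * v i)" for s
    have wsmall: "norm (w s i) < min r 1" if "norm s < r0 / M" "i < n" for s i
    proof -
      have "norm (w s i) \<le> norm t + norm s * norm (v i)"
        unfolding w_def by (metis norm_triangle_ineq norm_mult)
      also have "norm s * norm (v i) \<le> norm s * M" by (intro mult_left_mono vM that) auto
      also have "norm s * M < r0" using that M by (simp add: field_simps)
      finally have "norm (w s i) < norm t + r0" by simp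
      then show ?thesis using tn unfolding r0_def by (auto simp: min_def split: if_splits)
    qed
    have evs: "eventually (\<lambda>s. norm s < r0 / M) (at (0::complex))"
    proof -
      have "eventually (\<lambda>s. s \<in> ball 0 (r0 / M)) (nhds (0::complex))"
        using r0 M by (intro eventually_nhds_in_open) auto
      then show ?thesis by (auto simp: eventually_at_filter elim: eventually_mono)
    qed
    have lim2: "((\<lambda>s. G (w s)) \<longlongrightarrow> G (w 0)) (at 0)"
      unfolding G_def
    proof (rule infsum_tendsto_dominated[where B = a])
      show "a summable_on MI" using finite_sum by (simp add: MI_def)
      show "eventually (\<lambda>s. \<forall>k\<in>MI. norm (complex_of_real (a k) * monom_val n k (w s)) \<le> a k) (at 0)"
        using evs
      proof eventually_elim
        case (elim s)
        show ?case
        proof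
          fix k assume k: "k \<in> MI"
          have "norm (monom_val n k (w s)) \<le> 1 ^ (\<Sum>i<n. k i)"
            by (rule norm_monom_le) (use wsmall[OF elim] in \<open>auto intro: less_imp_le\<close>)
          then show "norm (complex_of_real (a k) * monom_val n k (w s)) \<le> a k"
            using nonneg k by (simp add: norm_mult MI_def mult_left_le)
        qed
      qed
      show "\<forall>k\<in>MI. norm (complex_of_real (a k) * monom_val n k (w 0)) \<le> a k"
      proof
        fix k assume k: "k \<in> MI"
        have "norm (monom_val n k (w 0)) \<le> 1 ^ (\<Sum>i<n. k i)"
          by (rule norm_monom_le) (use tn in \<open>auto simp: w_def r0_def\<close>)
        then show "norm (complex_of_real (a k) * monom_val n k (w 0)) \<le> a k"
          using nonneg k by (simp add: norm_mult MI_def mult_left_le)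
      qed
      show "\<forall>k\<in>MI. ((\<lambda>s. complex_of_real (a k) * monom_val n k (w s)) \<longlongrightarrow>
              complex_of_real (a k) * monom_val n k (w 0)) (at 0)"
      proof
        fix k
        have "isCont (\<lambda>s. complex_of_real (a k) * monom_val n k (w s)) 0"
          unfolding monom_val_def w_def by (intro continuous_intros)
        then show "((\<lambda>s. complex_of_real (a k) * monom_val n k (w s)) \<longlongrightarrow>
              complex_of_real (a k) * monom_val n k (w 0)) (at 0)"
          by (rule isContD)
      qed
    qed
    have "G (w 0) = eval_fps F t"
      using gG[of t] tn by (simp add: w_def r0_def)
    with lim2 have lim2': "((\<lambda>s. G (w s)) \<longlongrightarrow> eval_fps F t) (at 0)" by simp
    have lim3: "((\<lambda>s. G (w s) * (poly qs s / s^j0)) \<longlongrightarrow> eval_fps F t * poly q0 t) (at 0)"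
      by (intro tendsto_mult lim1 lim2')
    have evroot: "eventually (\<lambda>s. s \<notin> {s. poly qs s = 0}) (at (0::complex))"
      using islimpt_finite[OF poly_roots_finite[OF qs0], of 0] by (simp add: islimpt_iff_eventually)
    have "eventually (\<lambda>s. G (w s) * (poly qs s / s^j0) = poly ps s / s^j0) (at 0)"
      using evs evroot
    proof eventually_elim
      case (elim s)
      have Qw: "Q (w s) = poly qs s" unfolding qs_def w_def by (simp add: poly_map_poly_eval evQ)
      have Pw: "P (w s) = poly ps s" unfolding ps_def w_def by (simp add: poly_map_poly_eval evP)
      have "((\<lambda>k. complex_of_real (a k) * monom_val n k (w s)) has_sum (P (w s) / Q (w s))) MI"
        by (rule hs) (use wsmall[OF elim(1)] elim(2) Qw in auto)
      then have "G (w s) = P (w s) / Q (w s)" unfolding G_def by (rule infsumI)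
      then show ?case using elim(2) Qw Pw by (simp add: field_simps)
    qed
    with lim3 have "((\<lambda>s. poly ps s / s^j0) \<longlongrightarrow> eval_fps F t * poly q0 t) (at 0)"
      by (rule tendsto_cong[THEN iffD1, rotated])
    from poly_div_power_limit[OF this] have "coeff ps j0 = eval_fps F t * poly q0 t" by simp
    then show ?thesis by (simp add: cps p0_def)
  qed
  obtain \<rho> where \<rho>: "\<rho> > 1" and sb: "summable (\<lambda>m. b m * \<rho>^m)"
    using one_dim[where b = b and q = q0 and Z = "{t. poly q0 t = 0}" and p = p0,
        OF b0 bs _ r0 poly_roots_finite[of q0]] key q0nz
    unfolding F_def q0_def by auto
  have sk: "(\<lambda>k. a k * \<rho> ^ (\<Sum>i<n. k i)) summable_on MI"
    using group_summable_back[OF finite_sum nonneg, of \<rho>] sb \<rho> unfolding b_def MI_def by auto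
  show ?thesis
  proof (intro exI[of _ "\<rho> - 1"] conjI allI impI)
    show "\<rho> - 1 > 0" using \<rho> by simp
    fix w :: "nat \<Rightarrow> complex" assume w: "\<forall>i<n. norm (w i) \<le> 1 + (\<rho> - 1)"
    have "(\<lambda>k. norm (complex_of_real (a k) * monom_val n k w)) summable_on MI"
    proof (rule summable_on_comparison_test[OF sk])
      fix k assume k: "k \<in> MI"
      have "norm (complex_of_real (a k) * monom_val n k w) = a k * norm (monom_val n k w)"
        using nonneg k by (simp add: norm_mult MI_def)
      also have "\<dots> \<le> a k * \<rho> ^ (\<Sum>i<n. k i)"
        using nonneg k norm_monom_le[of n w \<rho> k] w by (intro mult_left_mono) (auto simp: MI_def)
      finally show "norm (complex_of_real (a k) * monom_val n k w) \<le> a k * \<rho> ^ (\<Sum>i<n. k i)" .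
    qed simp
    then show "(\<lambda>k. complex_of_real (a k) * monom_val n k w) summable_on multi_indices n"
      unfolding MI_def by (rule Infinite_Sum.abs_summable_summable)
  qed
qed

end
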